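(* For each $n\in\mathbb{N}$ let $A_n\subseteq\mathcal{R}$ be L-measurable, and suppose $\lim_{N\to\infty}M\big(\bigcap_{n=1}^N A_n\big)$ exists in $\mathcal{R}$. Let $X\subseteq\mathcal{R}$ be outer measurable. Then $X\cap\bigcap_{n=1}^\infty A_n$ is outer measurable, the limit $\lim_{N\to\infty}M_u\big(X\cap\bigcap_{n=1}^N A_n\big)$ exists in $\mathcal{R}$, and $$\lim_{N\to\infty}M_u\Big(X\cap\bigcap_{n=1}^N A_n\Big)=M_u\Big(X\cap\bigcap_{n=1}^\infty A_n\Big).$$
   Context: $\mathcal{R}$ denotes the Levi-Civita field: functions $x:\mathbb{Q}\to\mathbb{R}$ with left-finite support, with componentwise addition and formal power series multiplication, ordered by $x>0$ iff $x\ne0$ and $x[\min\operatorname{supp}x]>0$; it is a non-Archimedean ordered field extension of $\mathbb{R}$, Cauchy complete in the order topology, in which all limits and series are taken (a series $\sum a_n$ converges iff $a_n\to0$). An interval is a set $[a,b],[a,b),(a,b]$ or $(a,b)$ with $a<b$ in $\mathcal{R}$, of length $l=b-a$. A cover of $A\subseteq\mathcal{R}$ is a sequence of intervals $(S_n)_{n\ge1}$ with $A\subseteq\bigcup_n S_n$ and $\sum_n l(S_n)$ convergent in $\mathcal{R}$. $A$ is called outer measurable if the infimum $\inf\{\sum_n l(S_n): (S_n)\text{ a cover of }A\}$ exists in $\mathcal{R}$; this infimum is then called the outer measure $M_u(A)$. An outer measurable set $A\subseteq\mathcal{R}$ is L-measurable if for every outer measurable $B\subseteq\mathcal{R}$ both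 $A\cap B$ and $A^c\cap B$ (where $A^c=\mathcal{R}\setminus A$) are outer measurable and $M_u(B)=M_u(A\cap B)+M_u(A^c\cap B)$; then its L-measure is $M(A):=M_u(A)$. Finite intersections of L-measurable sets are L-measurable, so $M(\bigcap_{n=1}^N A_n)$ is defined. *)

theory Defs
  imports Complex_Main
begin

section \<open>The Levi-Civita field (as an ordered additive group with order topology)\<close>

typedef lc = "{x :: rat \<Rightarrow> real. \<forall>q. finite {p. p < q \<and> x p \<noteq> 0}}"
  morphisms Rep_lc Abs_lc
  by (rule exI[of _ "\<lambda>_. 0"]) simp

setup_lifting type_definition_lc

lemma lf_plus:
  assumes "\<And>q. finite {p. p < q \<and> x p \<noteq> (0::real)}" "\<And>q. finite {p. p < q \<and> y p \<noteq> (0::real)}"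
  shows "finite {p. p < r \<and> x p + y p \<noteq> 0}" "finite {p. p < r \<and> x p - y p \<noteq> 0}"
proof -
  have "{p. p < r \<and> x p + y p \<noteq> 0} \<subseteq> {p. p < r \<and> x p \<noteq> 0} \<union> {p. p < r \<and> y p \<noteq> 0}"
    by auto
  then show "finite {p. p < r \<and> x p + y p \<noteq> 0}"
    using assms(1,2) by (meson finite_UnI finite_subset)
  have "{p. p < r \<and> x p - y p \<noteq> 0} \<subseteq> {p. p < r \<and> x p \<noteq> 0} \<union> {p. p < r \<and> y p \<noteq> 0}"
    by auto
  then show "finite {p. p < r \<and> x p - y p \<noteq> 0}"
    using assms(1,2) by (meson finite_UnI finite_subset)
qed

instantiation lc :: ab_group_add
begin

lift_definition zero_lc :: lc is "\<lambda>_. 0" by simp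

lift_definition plus_lc :: "lc \<Rightarrow> lc \<Rightarrow> lc" is "\<lambda>x y q. x q + y q"
  using lf_plus by blast

lift_definition uminus_lc :: "lc \<Rightarrow> lc" is "\<lambda>x q. - x q" by simp

lift_definition minus_lc :: "lc \<Rightarrow> lc \<Rightarrow> lc" is "\<lambda>x y q. x q - y q"
  using lf_plus by blast

instance
  by standard (transfer; simp add: fun_eq_iff algebra_simps)+

end

text \<open>Formal power series multiplication (not needed for the statement; recorded for
  completeness of the description of the field).\<close>
definition lc_mult :: "lc \<Rightarrow> lc \<Rightarrow> lc" where
  "lc_mult x y = Abs_lc (\<lambda>q. \<Sum>(a, b) \<in> {(a, b). a + b = q \<and> Rep_lc x a \<noteq> 0 \<and> Rep_lc y b \<noteq> 0}.
       Rep_lc x a * Rep_lc y b)"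

definition lc_pos :: "lc \<Rightarrow> bool" where
  "lc_pos x \<longleftrightarrow> (\<exists>q. Rep_lc x q > 0 \<and> (\<forall>p<q. Rep_lc x p = 0))"

lemma lc_lead_exists:
  assumes "x \<noteq> 0"
  shows "\<exists>q. Rep_lc x q \<noteq> 0 \<and> (\<forall>p<q. Rep_lc x p = 0)"
proof -
  have "\<exists>s. Rep_lc x s \<noteq> 0"
  proof (rule ccontr)
    assume "\<not> (\<exists>s. Rep_lc x s \<noteq> 0)"
    then have "Rep_lc x = Rep_lc 0" by (simp add: zero_lc.rep_eq fun_eq_iff)
    then show False using assms Rep_lc_inject by blast
  qed
  then obtain s where s: "Rep_lc x s \<noteq> 0" by blast
  define F where "F = {p. p < s \<and> Rep_lc x p \<noteq> 0}"
  have finF: "finite F" using Rep_lc[of x] unfolding F_def by simp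
  show ?thesis
  proof (cases "F = {}")
    case True
    have "\<forall>p<s. Rep_lc x p = 0"
    proof (intro allI impI)
      fix p assume "p < s"
      show "Rep_lc x p = 0"
      proof (rule ccontr)
        assume "Rep_lc x p \<noteq> 0"
        with \<open>p < s\<close> have "p \<in> F" unfolding F_def by simp
        with True show False by simp
      qed
    qed
    with s show ?thesis by blast
  next
    case False
    define m where "m = Min F"
    have mF: "m \<in> F" using finF False unfolding m_def by (rule Min_in)
    have m1: "Rep_lc x m \<noteq> 0" and m2: "m < s" using mF unfolding F_def by simp_all
    have "\<forall>p<m. Rep_lc x p = 0"
    proof (intro allI impI)
      fix p assume pm: "p < m"
      show "Rep_lc x p = 0"
      proof (rule ccontr)
        assume "Rep_lc x p \<noteq> 0"
        moreover have "p < s" using pm m2 by (rule less_trans)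
        ultimately have "p \<in> F" unfolding F_def by simp
        then have "m \<le> p" unfolding m_def using finF by (simp add: Min_le)
        with pm show False by simp
      qed
    qed
    with m1 show ?thesis by blast
  qed
qed

lemma lc_lead_unique:
  assumes "Rep_lc x q \<noteq> 0" "\<forall>p<q. Rep_lc x p = 0"
    and "Rep_lc x q' \<noteq> 0" "\<forall>p<q'. Rep_lc x p = 0"
  shows "q = q'"
  using assms by (cases q q' rule: linorder_cases) auto

lemma lc_pos_or_neg: "x \<noteq> 0 \<Longrightarrow> lc_pos x \<or> lc_pos (- x)"
proof -
  assume "x \<noteq> 0"
  then obtain q where q: "Rep_lc x q \<noteq> 0" "\<forall>p<q. Rep_lc x p = 0"
    using lc_lead_exists by blast
  show ?thesis
  proof (cases "Rep_lc x q > 0")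
    case True then show ?thesis using q unfolding lc_pos_def by blast
  next
    case False
    then have "Rep_lc (- x) q > 0" using q(1) by (simp add: uminus_lc.rep_eq)
    moreover have "\<forall>p<q. Rep_lc (- x) p = 0" using q(2) by (simp add: uminus_lc.rep_eq)
    ultimately show ?thesis unfolding lc_pos_def by blast
  qed
qed

lemma lc_pos_not_neg: "lc_pos x \<Longrightarrow> \<not> lc_pos (- x)"
proof
  assume "lc_pos x" "lc_pos (- x)"
  then obtain q q' where q: "Rep_lc x q > 0" "\<forall>p<q. Rep_lc x p = 0"
    and q': "- Rep_lc x q' > 0" "\<forall>p<q'. - Rep_lc x p = 0"
    unfolding lc_pos_def uminus_lc.rep_eq by blast
  have "q = q'" by (rule lc_lead_unique[of x]) (use q q' in auto)
  then show False using q q' by simp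
qed

lemma lc_pos_zero: "\<not> lc_pos 0"
  unfolding lc_pos_def zero_lc.rep_eq by simp

lemma lc_pos_add:
  assumes "lc_pos x" "lc_pos y" shows "lc_pos (x + y)"
proof -
  obtain q1 where q1: "Rep_lc x q1 > 0" "\<forall>p<q1. Rep_lc x p = 0" using assms(1) lc_pos_def by auto
  obtain q2 where q2: "Rep_lc y q2 > 0" "\<forall>p<q2. Rep_lc y p = 0" using assms(2) lc_pos_def by auto
  show ?thesis unfolding lc_pos_def plus_lc.rep_eq
  proof (cases q1 q2 rule: linorder_cases)
    case less then show "\<exists>q. 0 < Rep_lc x q + Rep_lc y q \<and> (\<forall>p<q. Rep_lc x p + Rep_lc y p = 0)"
      using q1 q2 by (intro exI[of _ q1]) auto
  next
    case equal then show "\<exists>q. 0 < Rep_lc x q + Rep_lc y q \<and> (\<forall>p<q. Rep_lc x p + Rep_lc y p = 0)"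
      using q1 q2 by (intro exI[of _ q1]) auto
  next
    case greater then show "\<exists>q. 0 < Rep_lc x q + Rep_lc y q \<and> (\<forall>p<q. Rep_lc x p + Rep_lc y p = 0)"
      using q1 q2 by (intro exI[of _ q2]) auto
  qed
qed

instantiation lc :: linordered_ab_group_add
begin

definition less_lc :: "lc \<Rightarrow> lc \<Rightarrow> bool" where
  "less_lc x y \<longleftrightarrow> lc_pos (y - x)"

definition less_eq_lc :: "lc \<Rightarrow> lc \<Rightarrow> bool" where
  "less_eq_lc x y \<longleftrightarrow> x = y \<or> lc_pos (y - x)"

instance
proof
  fix x y z :: lc
  show "(x < y) = (x \<le> y \<and> \<not> y \<le> x)"
    unfolding less_lc_def less_eq_lc_def
    using lc_pos_not_neg[of "y - x"] lc_pos_zero by auto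
  show "x \<le> x" by (simp add: less_eq_lc_def)
  show "x \<le> y \<Longrightarrow> y \<le> z \<Longrightarrow> x \<le> z"
  proof -
    assume a: "x \<le> y" "y \<le> z"
    have e: "z - x = (z - y) + (y - x)" by simp
    show "x \<le> z" using a lc_pos_add[of "z - y" "y - x"] unfolding less_eq_lc_def e
      by auto
  qed
  show "x \<le> y \<Longrightarrow> y \<le> x \<Longrightarrow> x = y"
    unfolding less_eq_lc_def using lc_pos_not_neg[of "y - x"] by auto
  show "x \<le> y \<or> y \<le> x"
    unfolding less_eq_lc_def using lc_pos_or_neg[of "y - x"] by auto
  show "x \<le> y \<Longrightarrow> z + x \<le> z + y"
  proof -
    have e: "(z + y) - (z + x) = y - x" by (rule add_diff_cancel_left)
    assume "x \<le> y"
    then show "z + x \<le> z + y" unfolding less_eq_lc_def e by auto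
  qed
qed

end

instantiation lc :: linorder_topology
begin

definition open_lc :: "lc set \<Rightarrow> bool" where
  "open_lc = generate_topology (range lessThan \<union> range greaterThan)"

instance by standard (simp add: open_lc_def)

end

section \<open>Outer measure and L-measurability\<close>

definition lc_interval :: "lc set \<Rightarrow> lc \<Rightarrow> lc \<Rightarrow> bool" where
  "lc_interval S a b \<longleftrightarrow> a < b \<and> (S = {a..b} \<or> S = {a..<b} \<or> S = {a<..b} \<or> S = {a<..<b})"

definition cover_sum :: "lc set \<Rightarrow> lc \<Rightarrow> bool" where
  "cover_sum A s \<longleftrightarrow> (\<exists>S a b. (\<forall>n. lc_interval (S n) (a n) (b n)) \<and> A \<subseteq> (\<Union>n. S n)
       \<and> (\<lambda>n. b n - a n) sums s)"

definition is_inf :: "lc set \<Rightarrow> lc \<Rightarrow> bool" where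
  "is_inf T m \<longleftrightarrow> (\<forall>t\<in>T. m \<le> t) \<and> (\<forall>l. (\<forall>t\<in>T. l \<le> t) \<longrightarrow> l \<le> m)"

definition outer_measurable :: "lc set \<Rightarrow> bool" where
  "outer_measurable A \<longleftrightarrow> (\<exists>m. is_inf {s. cover_sum A s} m)"

definition Mu :: "lc set \<Rightarrow> lc" where
  "Mu A = (THE m. is_inf {s. cover_sum A s} m)"

definition L_measurable :: "lc set \<Rightarrow> bool" where
  "L_measurable A \<longleftrightarrow> outer_measurable A \<and>
     (\<forall>B. outer_measurable B \<longrightarrow>
        outer_measurable (A \<inter> B) \<and> outer_measurable (- A \<inter> B) \<and>
        Mu B = Mu (A \<inter> B) + Mu (- A \<inter> B))"

definition Lmeasure :: "lc set \<Rightarrow> lc" where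
  "Lmeasure A = Mu A"

end

theory Submission imports Defs "HOL-Library.Nat_Bijection" begin

definition W :: "rat \<Rightarrow> lc set" where "W q = {z. \<forall>p<q. Rep_lc z p = 0}"

lemma W_zero[simp]: "0 \<in> W q" by (simp add: W_def zero_lc.rep_eq)
lemma W_add: "x \<in> W q \<Longrightarrow> y \<in> W q \<Longrightarrow> x + y \<in> W q" by (simp add: W_def plus_lc.rep_eq)
lemma W_diff: "x \<in> W q \<Longrightarrow> y \<in> W q \<Longrightarrow> x - y \<in> W q" by (simp add: W_def minus_lc.rep_eq)
lemma W_uminus: "x \<in> W q \<Longrightarrow> - x \<in> W q" by (simp add: W_def uminus_lc.rep_eq)
lemma W_uminus_iff: "- x \<in> W q \<longleftrightarrow> x \<in> W q" by (simp add: W_def uminus_lc.rep_eq)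
lemma W_sum: "(\<And>i. i \<in> F \<Longrightarrow> f i \<in> W q) \<Longrightarrow> sum f F \<in> W q"
  by (induction F rule: infinite_finite_induct) (auto intro: W_add)
lemma W_mono: "x \<in> W q \<Longrightarrow> q' \<le> q \<Longrightarrow> x \<in> W q'" by (auto simp: W_def)

definition tq :: "rat \<Rightarrow> lc" where "tq q = Abs_lc (\<lambda>p. if p = q then 1 else 0)"

lemma Rep_tq: "Rep_lc (tq q) = (\<lambda>p. if p = q then 1 else 0)"
proof -
  have "\<forall>r. finite {p. p < r \<and> (if p = q then 1 else 0 :: real) \<noteq> 0}"
  proof
    fix r show "finite {p. p < r \<and> (if p = q then 1 else 0 :: real) \<noteq> 0}"
      by (rule finite_subset[of _ "{q}"]) auto
  qed
  then show ?thesis unfolding tq_def by (simp add: Abs_lc_inverse)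
qed

lemma lt_iff_pos: "(x::lc) < y \<longleftrightarrow> lc_pos (y - x)" by (simp add: less_lc_def)

lemma tq_pos: "0 < tq q"
  unfolding lt_iff_pos lc_pos_def by (rule exI[of _ q]) (simp add: Rep_tq)

lemma tq_W: "tq q \<in> W q" by (simp add: W_def Rep_tq)

lemma pos_lead: "0 < (w::lc) \<Longrightarrow> \<exists>e. Rep_lc w e > 0 \<and> (\<forall>p<e. Rep_lc w p = 0)"
  by (simp add: lt_iff_pos lc_pos_def)

lemma less_of_vanish:
  assumes "Rep_lc w e > 0" "\<forall>p<e. Rep_lc w p = 0" "\<forall>p\<le>e. Rep_lc z p = 0"
  shows "z < w"
  unfolding lt_iff_pos lc_pos_def
  by (rule exI[of _ e]) (use assms in \<open>auto simp: minus_lc.rep_eq\<close>)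

lemma W_less:
  assumes "Rep_lc w e > 0" "\<forall>p<e. Rep_lc w p = 0" "z \<in> W q" "e < q"
  shows "z < w"
  using assms by (intro less_of_vanish[OF assms(1,2)]) (auto simp: W_def)

lemma W_convex:
  assumes "0 \<le> z" "z \<le> w" "w \<in> W q"
  shows "z \<in> W q"
proof (cases "z = 0")
  case True then show ?thesis by simp
next
  case False
  then have "0 < z" using assms(1) by simp
  then obtain p0 where p0: "Rep_lc z p0 > 0" "\<forall>p<p0. Rep_lc z p = 0" using pos_lead by blast
  show ?thesis
  proof (rule ccontr)
    assume nW: "z \<notin> W q"
    have "p0 < q"
    proof (rule ccontr)
      assume "\<not> p0 < q"
      then have "z \<in> W q" using p0(2) by (auto simp: W_def)
      with nW show False by simp
    qed
    show False
    proof (cases "z = w")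
      case True then show False using nW assms by simp
    next
      case False
      then have "z < w" using assms by simp
      then obtain r where r: "Rep_lc (w - z) r > 0" "\<forall>p<r. Rep_lc (w - z) p = 0"
        using pos_lead[of "w - z"] by (auto simp: lt_iff_pos lc_pos_def)
      have wp: "\<And>p. p < q \<Longrightarrow> Rep_lc w p = 0" using assms(3) by (auto simp: W_def)
      have e0: "Rep_lc (w - z) p0 < 0" using p0 wp[OF \<open>p0 < q\<close>] by (simp add: minus_lc.rep_eq)
      show False
      proof (cases r p0 rule: linorder_cases)
        case less
        then have "Rep_lc (w - z) r = 0" using p0(2) wp[of r] \<open>p0 < q\<close> by (simp add: minus_lc.rep_eq)
        then show False using r by simp
      next
        case equal then show False using r e0 by simp
      next
        case greater then show False using r(2) e0 by auto
      qed
    qed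
  qed
qed

lemma abs_W_less:
  assumes "x - l \<in> W q" "Rep_lc w e > 0" "\<forall>p<e. Rep_lc w p = 0" "e < q"
  shows "x < l + w" "l - w < x"
proof -
  have "x - l < w" by (rule W_less[OF assms(2,3,1,4)])
  then show "x < l + w" by (simp add: algebra_simps)
  have "l - x \<in> W q" using W_uminus[OF assms(1)] by simp
  then have "l - x < w" by (rule W_less[OF assms(2,3) _ assms(4)])
  then show "l - w < x" by (simp add: algebra_simps)
qed

lemma tendsto_W:
  "(X \<longlonglongrightarrow> (l::lc)) \<longleftrightarrow> (\<forall>q. eventually (\<lambda>n. X n - l \<in> W q) sequentially)"
proof
  assume X: "X \<longlonglongrightarrow> l"
  show "\<forall>q. eventually (\<lambda>n. X n - l \<in> W q) sequentially"
  proof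
    fix q
    have "eventually (\<lambda>n. l - tq q < X n) sequentially" "eventually (\<lambda>n. X n < l + tq q) sequentially"
      using X tq_pos[of q] unfolding order_tendsto_iff by auto
    then show "eventually (\<lambda>n. X n - l \<in> W q) sequentially"
    proof eventually_elim
      case (elim n)
      show ?case
      proof (cases "l \<le> X n")
        case True
        then show ?thesis using elim by (intro W_convex[OF _ _ tq_W]) (auto simp: algebra_simps)
      next
        case False
        then have "l - X n \<in> W q" using elim by (intro W_convex[OF _ _ tq_W]) (auto simp: algebra_simps)
        then show ?thesis using W_uminus by fastforce
      qed
    qed
  qed
next
  assume H: "\<forall>q. eventually (\<lambda>n. X n - l \<in> W q) sequentially"
  show "X \<longlonglongrightarrow> l"
    unfolding order_tendsto_iff
  proof safe
    fix a assume "a < l"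
    then obtain e where e: "Rep_lc (l - a) e > 0" "\<forall>p<e. Rep_lc (l - a) p = 0" using pos_lead[of "l - a"] by auto
    show "eventually (\<lambda>n. a < X n) sequentially"
      using H[rule_format, of "e+1"] proof eventually_elim
      case (elim n)
      from abs_W_less(2)[OF elim e] show ?case by simp
    qed
  next
    fix a assume "l < a"
    then obtain e where e: "Rep_lc (a - l) e > 0" "\<forall>p<e. Rep_lc (a - l) p = 0" using pos_lead[of "a - l"] by auto
    show "eventually (\<lambda>n. X n < a) sequentially"
      using H[rule_format, of "e+1"] proof eventually_elim
      case (elim n)
      from abs_W_less(1)[OF elim e] show ?case by simp
    qed
  qed
qed


lemma W_agree: "x - y \<in> W q \<Longrightarrow> p < q \<Longrightarrow> Rep_lc x p = Rep_lc y p"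
  by (auto simp: W_def minus_lc.rep_eq)

lemma W_complete:
  fixes X :: "nat \<Rightarrow> lc"
  assumes C: "\<forall>q. \<exists>K. \<forall>m\<ge>K. \<forall>n\<ge>K. X m - X n \<in> W q"
  shows "\<exists>l. X \<longlonglongrightarrow> l"
proof -
  define K where "K q = (SOME K. \<forall>m\<ge>K. \<forall>n\<ge>K. X m - X n \<in> W q)" for q
  have K: "\<And>q m n. m \<ge> K q \<Longrightarrow> n \<ge> K q \<Longrightarrow> X m - X n \<in> W q"
  proof -
    fix q m n assume "m \<ge> K q" "n \<ge> K q"
    have "\<forall>m\<ge>K q. \<forall>n\<ge>K q. X m - X n \<in> W q"
      unfolding K_def by (rule someI_ex) (rule C[rule_format])
    then show "X m - X n \<in> W q" using \<open>m \<ge> K q\<close> \<open>n \<ge> K q\<close> by blast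
  qed
  have agree: "Rep_lc (X m) p = Rep_lc (X n) p" if "m \<ge> K q" "n \<ge> K q" "p < q" for m n p q
    using W_agree[OF K[OF that(1,2)] that(3)] .
  define l0 where "l0 p = Rep_lc (X (K (p+1))) p" for p
  have l0: "l0 p = Rep_lc (X n) p" if "n \<ge> K q" "p < q" for n p q
  proof -
    define m where "m = max n (K (p+1))"
    have "Rep_lc (X m) p = Rep_lc (X (K (p+1))) p" by (rule agree[where q="p+1"]) (auto simp: m_def)
    moreover have "Rep_lc (X m) p = Rep_lc (X n) p" by (rule agree[where q=q]) (use that in \<open>auto simp: m_def\<close>)
    ultimately show ?thesis by (simp add: l0_def)
  qed
  have fin: "\<forall>r. finite {p. p < r \<and> l0 p \<noteq> 0}"
  proof
    fix r
    have "{p. p < r \<and> l0 p \<noteq> 0} \<subseteq> {p. p < r \<and> Rep_lc (X (K r)) p \<noteq> 0}"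
      using l0[where n="K r" and q=r] by auto
    moreover have "finite {p. p < r \<and> Rep_lc (X (K r)) p \<noteq> 0}" using Rep_lc[of "X (K r)"] by simp
    ultimately show "finite {p. p < r \<and> l0 p \<noteq> 0}" by (rule finite_subset)
  qed
  define l where "l = Abs_lc l0"
  have Rl: "Rep_lc l = l0" unfolding l_def using fin by (simp add: Abs_lc_inverse)
  have "X \<longlonglongrightarrow> l"
    unfolding tendsto_W
  proof
    fix q
    show "eventually (\<lambda>n. X n - l \<in> W q) sequentially"
      unfolding eventually_sequentially
    proof (rule exI[of _ "K q"], intro allI impI)
      fix n assume n: "K q \<le> n"
      show "X n - l \<in> W q" unfolding W_def
      proof (intro CollectI allI impI)
        fix p assume "p < q"
        then have "l0 p = Rep_lc (X n) p" using l0[OF n] by blast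
        then show "Rep_lc (X n - l) p = 0" by (simp add: minus_lc.rep_eq Rl)
      qed
    qed
  qed
  then show ?thesis by blast
qed

lemma terms_W_summable:
  fixes f :: "nat \<Rightarrow> lc"
  assumes "\<forall>q. eventually (\<lambda>n. f n \<in> W q) sequentially"
  shows "\<exists>s. f sums s"
proof -
  have "\<exists>l. (\<lambda>n. \<Sum>i<n. f i) \<longlonglongrightarrow> l"
  proof (rule W_complete, intro allI)
    fix q
    obtain K where K: "\<And>n. n \<ge> K \<Longrightarrow> f n \<in> W q" using assms[rule_format, of q] unfolding eventually_sequentially by blast
    have *: "(\<Sum>i<m. f i) - (\<Sum>i<n. f i) \<in> W q" if "n \<le> m" "K \<le> n" for m n
    proof -
      have "sum f {0..<m} - sum f {0..<n} = sum f {n..<m}"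
        using that by (intro sum_diff_nat_ivl) auto
      then have "(\<Sum>i<m. f i) - (\<Sum>i<n. f i) = (\<Sum>i\<in>{n..<m}. f i)"
        by (simp only: atLeast0LessThan)
      also have "\<dots> \<in> W q" using that by (intro W_sum K) auto
      finally show ?thesis .
    qed
    show "\<exists>K. \<forall>m\<ge>K. \<forall>n\<ge>K. (\<Sum>i<m. f i) - (\<Sum>i<n. f i) \<in> W q"
    proof (intro exI allI impI)
      fix m n assume "K \<le> m" "K \<le> n"
      show "(\<Sum>i<m. f i) - (\<Sum>i<n. f i) \<in> W q"
      proof (cases "n \<le> m")
        case True then show ?thesis using * \<open>K \<le> n\<close> by blast
      next
        case False
        then have "(\<Sum>i<n. f i) - (\<Sum>i<m. f i) \<in> W q" using * \<open>K \<le> m\<close> by simp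
        then show ?thesis using W_uminus by fastforce
      qed
    qed
  qed
  then show ?thesis by (auto simp: sums_def)
qed

lemma sums_terms_W:
  fixes f :: "nat \<Rightarrow> lc"
  assumes "f sums s"
  shows "eventually (\<lambda>n. f n \<in> W q) sequentially"
proof -
  have L: "(\<lambda>n. \<Sum>i<n. f i) \<longlonglongrightarrow> s" using assms by (simp add: sums_def)
  have "eventually (\<lambda>n. (\<Sum>i<n. f i) - s \<in> W q) sequentially" using L unfolding tendsto_W by blast
  moreover have "eventually (\<lambda>n. (\<Sum>i<Suc n. f i) - s \<in> W q) sequentially"
    using L[THEN LIMSEQ_Suc] unfolding tendsto_W by blast
  ultimately show ?thesis
  proof eventually_elim
    case (elim n)
    have "f n = ((\<Sum>i<Suc n. f i) - s) - ((\<Sum>i<n. f i) - s)" by simp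
    then show ?case using W_diff[OF elim(2,1)] by simp
  qed
qed

lemma sums_partial_le:
  fixes f :: "nat \<Rightarrow> lc"
  assumes "f sums s" "\<And>n. 0 \<le> f n"
  shows "(\<Sum>i<n. f i) \<le> s"
proof -
  have "incseq (\<lambda>n. \<Sum>i<n. f i)" using assms(2) by (intro incseq_SucI) simp
  then show ?thesis using assms(1) unfolding sums_def by (rule incseq_le)
qed

lemma sums_term_le:
  fixes f :: "nat \<Rightarrow> lc"
  assumes "f sums s" "\<And>n. 0 \<le> f n"
  shows "f n \<le> s"
proof -
  have "f n \<le> (\<Sum>i<Suc n. f i)" using assms(2) by (simp add: sum_nonneg)
  also have "\<dots> \<le> s" by (rule sums_partial_le[OF assms])
  finally show ?thesis .
qed

lemma sums_nonneg:
  fixes f :: "nat \<Rightarrow> lc"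
  assumes "f sums s" "\<And>n. 0 \<le> f n"
  shows "0 \<le> s"
  using sums_partial_le[OF assms, of 0] by simp

lemma finite_eventually_notin: "finite (S::nat set) \<Longrightarrow> eventually (\<lambda>n. n \<notin> S) sequentially"
proof -
  assume "finite S"
  then obtain N where "\<forall>n\<in>S. n < N" using finite_nat_set_iff_bounded by blast
  then show ?thesis unfolding eventually_sequentially by (intro exI[of _ N]) auto
qed


lemma is_inf_unique: "is_inf T m \<Longrightarrow> is_inf T m' \<Longrightarrow> m = m'"
  unfolding is_inf_def by (meson order.antisym)

lemma Mu_inf: "outer_measurable A \<Longrightarrow> is_inf {s. cover_sum A s} (Mu A)"
  unfolding outer_measurable_def Mu_def by (metis is_inf_unique theI)

lemma Mu_eq: "is_inf {s. cover_sum A s} m \<Longrightarrow> Mu A = m"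
  unfolding Mu_def by (metis is_inf_unique the_equality)

lemma Mu_le_cover: "outer_measurable A \<Longrightarrow> cover_sum A s \<Longrightarrow> Mu A \<le> s"
  using Mu_inf unfolding is_inf_def by blast

lemma le_Mu: "outer_measurable A \<Longrightarrow> (\<And>s. cover_sum A s \<Longrightarrow> l \<le> s) \<Longrightarrow> l \<le> Mu A"
  using Mu_inf unfolding is_inf_def by blast

lemma cover_sum_mono: "A \<subseteq> B \<Longrightarrow> cover_sum B s \<Longrightarrow> cover_sum A s"
  unfolding cover_sum_def by blast

lemma Mu_mono: "A \<subseteq> B \<Longrightarrow> outer_measurable A \<Longrightarrow> outer_measurable B \<Longrightarrow> Mu A \<le> Mu B"
  by (meson Mu_le_cover cover_sum_mono le_Mu)

lemma Mu_approx:
  assumes "outer_measurable A" "0 < d"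
  shows "\<exists>s. cover_sum A s \<and> s < Mu A + d"
proof (rule ccontr)
  assume "\<not> ?thesis"
  then have "Mu A + d \<le> Mu A" by (intro le_Mu[OF assms(1)]) (auto simp: not_less)
  with assms(2) show False by simp
qed

lemma interval_pos: "lc_interval S a b \<Longrightarrow> 0 < b - a"
  by (simp add: lc_interval_def)

lemma merge_cover:
  fixes S :: "nat \<Rightarrow> nat \<Rightarrow> lc set" and a b :: "nat \<Rightarrow> nat \<Rightarrow> lc" and c :: "nat \<Rightarrow> lc"
  assumes I: "\<And>k j. lc_interval (S k j) (a k j) (b k j)"
    and sm: "\<And>k. (\<lambda>j. b k j - a k j) sums c k"
    and c0: "\<And>q. eventually (\<lambda>k. c k \<in> W q) sequentially"
    and R: "\<And>K. (\<Sum>k<K. c k) \<le> R"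
  shows "\<exists>T. cover_sum (\<Union>k. \<Union>j. S k j) T \<and> T \<le> R"
proof -
  define g where "g k j = b k j - a k j" for k j
  have gpos: "0 \<le> g k j" for k j using interval_pos[OF I] by (simp add: g_def less_imp_le)
  have sm': "(\<lambda>j. g k j) sums c k" for k using sm by (simp add: g_def)
  define h where "h i = g (fst (prod_decode i)) (snd (prod_decode i))" for i
  have hW: "eventually (\<lambda>i::nat. h i \<in> W q) sequentially" for q
  proof -
    obtain K0 where K0: "\<And>k. k \<ge> K0 \<Longrightarrow> c k \<in> W q" using c0[of q] unfolding eventually_sequentially by blast
    have "\<exists>J. \<forall>k<K0. \<forall>j\<ge>J. g k j \<in> W q"
    proof (induction K0)
      case 0 then show ?case by simp
    next
      case (Suc K)
      then obtain J where J: "\<forall>k<K. \<forall>j\<ge>J. g k j \<in> W q" by blast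
      obtain J' where J': "\<forall>j\<ge>J'. g K j \<in> W q"
        using sums_terms_W[OF sm'[of K], of q] unfolding eventually_sequentially by blast
      show ?case by (rule exI[of _ "max J J'"]) (use J J' less_Suc_eq in auto)
    qed
    then obtain J where J: "\<And>k j. k < K0 \<Longrightarrow> j \<ge> J \<Longrightarrow> g k j \<in> W q" by blast
    have good: "g k j \<in> W q" if "(k, j) \<notin> {..<K0} \<times> {..<J}" for k j
    proof (cases "k < K0")
      case True then show ?thesis using that J by auto
    next
      case False
      then have "c k \<in> W q" using K0 by simp
      then show ?thesis by (rule W_convex[OF gpos sums_term_le[OF sm' gpos]])
    qed
    have fin: "finite (prod_decode -` ({..<K0} \<times> {..<J}))"
      by (rule finite_vimageI) (auto simp: inj_prod_decode)
    show ?thesis using finite_eventually_notin[OF fin]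
    proof eventually_elim
      case (elim i)
      then show ?case unfolding h_def by (intro good) (simp add: prod_eq_iff)
    qed
  qed
  obtain T where T: "h sums T" using terms_W_summable hW by blast
  have partial: "(\<Sum>i<n. h i) \<le> R" for n
  proof -
    define P where "P = prod_decode ` {..<n}"
    have finP: "finite P" by (simp add: P_def)
    obtain K where K: "\<forall>k\<in>fst ` P. k < K" using finite_nat_set_iff_bounded finP by blast
    obtain J where J: "\<forall>j\<in>snd ` P. j < J" using finite_nat_set_iff_bounded finP by blast
    have sub: "P \<subseteq> {..<K} \<times> {..<J}" using K J by force
    have "(\<Sum>i<n. h i) = (\<Sum>x\<in>P. g (fst x) (snd x))"
      unfolding P_def h_def by (subst sum.reindex) (auto intro: inj_on_subset[OF inj_prod_decode])
    also have "\<dots> \<le> (\<Sum>x\<in>{..<K} \<times> {..<J}. g (fst x) (snd x))"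
      by (rule sum_mono2) (use sub gpos in auto)
    also have "\<dots> = (\<Sum>k<K. \<Sum>j<J. g k j)" by (simp add: sum.cartesian_product split_beta)
    also have "\<dots> \<le> (\<Sum>k<K. c k)" by (intro sum_mono sums_partial_le[OF sm' gpos])
    also have "\<dots> \<le> R" by (rule R)
    finally show ?thesis .
  qed
  have "T \<le> R" using T unfolding sums_def by (intro LIMSEQ_le_const2) (auto intro: partial)
  moreover have "cover_sum (\<Union>k. \<Union>j. S k j) T"
    unfolding cover_sum_def
  proof (intro exI conjI)
    show "\<forall>i. lc_interval (S (fst (prod_decode i)) (snd (prod_decode i)))
        (a (fst (prod_decode i)) (snd (prod_decode i))) (b (fst (prod_decode i)) (snd (prod_decode i)))"
      using I by blast
    show "(\<Union>k. \<Union>j. S k j) \<subseteq> (\<Union>i. S (fst (prod_decode i)) (snd (prod_decode i)))"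
    proof
      fix x assume "x \<in> (\<Union>k. \<Union>j. S k j)"
      then obtain k j where "x \<in> S k j" by blast
      moreover have "prod_decode (prod_encode (k, j)) = (k, j)" by simp
      ultimately show "x \<in> (\<Union>i. S (fst (prod_decode i)) (snd (prod_decode i)))"
        by (intro UN_I[of "prod_encode (k, j)"]) auto
    qed
    show "(\<lambda>i. b (fst (prod_decode i)) (snd (prod_decode i)) - a (fst (prod_decode i)) (snd (prod_decode i))) sums T"
    proof -
      have "h = (\<lambda>i. b (fst (prod_decode i)) (snd (prod_decode i)) - a (fst (prod_decode i)) (snd (prod_decode i)))"
        by (simp add: fun_eq_iff h_def g_def)
      then show ?thesis using T by simp
    qed
  qed
  ultimately show ?thesis by blast
qed


theorem lemma4p2:
  fixes A :: "nat \<Rightarrow> lc set" and X :: "lc set"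
  assumes "\<And>n. n \<ge> 1 \<Longrightarrow> L_measurable (A n)"
    and "convergent (\<lambda>N. Lmeasure (\<Inter>n\<in>{1..N}. A n))"
    and "outer_measurable X"
  shows "outer_measurable (X \<inter> (\<Inter>n\<in>{1..}. A n)) \<and>
         convergent (\<lambda>N. Mu (X \<inter> (\<Inter>n\<in>{1..N}. A n))) \<and>
         (\<lambda>N. Mu (X \<inter> (\<Inter>n\<in>{1..N}. A n))) \<longlonglongrightarrow> Mu (X \<inter> (\<Inter>n\<in>{1..}. A n))"
proof -
  note Am = assms(1) and omX = assms(3)
  define B where "B N = (\<Inter>n\<in>{1..N}. A n)" for N
  have B_Suc: "B (Suc N) = A (Suc N) \<inter> B N" for N
  proof -
    have "{1..Suc N} = insert (Suc N) {1..N}" by auto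
    then show ?thesis unfolding B_def by simp
  qed
  have B1: "B (Suc 0) = A 1" unfolding B_def by auto
  have Aom: "outer_measurable (A n)" if "n \<ge> 1" for n
    using Am[OF that] by (simp add: L_measurable_def)
  have As1: "outer_measurable (A n \<inter> E)" if "n \<ge> 1" "outer_measurable E" for n E
    using Am[OF that(1)] that(2) unfolding L_measurable_def by blast
  have As2: "outer_measurable (- A n \<inter> E)" if "n \<ge> 1" "outer_measurable E" for n E
    using Am[OF that(1)] that(2) unfolding L_measurable_def by blast
  have As3: "Mu E = Mu (A n \<inter> E) + Mu (- A n \<inter> E)" if "n \<ge> 1" "outer_measurable E" for n E
    using Am[OF that(1)] that(2) unfolding L_measurable_def by blast
  have omB: "outer_measurable (B (Suc N))" for N
  proof (induction N)
    case 0 then show ?case using B1 Aom by simp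
  next
    case (Suc N)
    have "outer_measurable (A (Suc (Suc N)) \<inter> B (Suc N))" by (rule As1) (use Suc in auto)
    then show ?case unfolding B_Suc[of "Suc N"] .
  qed
  have omXB: "outer_measurable (X \<inter> B N)" for N
  proof (induction N)
    case 0 then show ?case using omX by (simp add: B_def)
  next
    case (Suc N)
    have "X \<inter> B (Suc N) = A (Suc N) \<inter> (X \<inter> B N)" using B_Suc by auto
    moreover have "outer_measurable (A (Suc N) \<inter> (X \<inter> B N))" by (rule As1) (use Suc in auto)
    ultimately show ?case by simp
  qed
  define y where "y n = Mu (B (Suc n))" for n
  define x where "x n = Mu (X \<inter> B (Suc n))" for n
  define D where "D n = - A (Suc (Suc n)) \<inter> B (Suc n)" for n
  have omD: "outer_measurable (D n)" for n
    unfolding D_def by (rule As2) (use omB in auto)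
  have ysplit: "y n = y (Suc n) + Mu (D n)" for n
  proof -
    have "Mu (B (Suc n)) = Mu (A (Suc (Suc n)) \<inter> B (Suc n)) + Mu (D n)"
      unfolding D_def by (rule As3) (use omB in auto)
    then show ?thesis unfolding y_def B_Suc[of "Suc n", symmetric] .
  qed
  have MuD: "Mu (D n) = y n - y (Suc n)" for n using ysplit[of n] by (simp add: algebra_simps)
  have xstep: "x n - x (Suc n) \<le> y n - y (Suc n)" for n
  proof -
    let ?E = "X \<inter> B (Suc n)"
    have e1: "A (Suc (Suc n)) \<inter> ?E = X \<inter> B (Suc (Suc n))" using B_Suc[of "Suc n"] by auto
    have "Mu ?E = Mu (A (Suc (Suc n)) \<inter> ?E) + Mu (- A (Suc (Suc n)) \<inter> ?E)"
      by (rule As3) (use omXB in auto)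
    then have sp: "x n = x (Suc n) + Mu (- A (Suc (Suc n)) \<inter> ?E)"
      unfolding x_def e1 .
    have om2: "outer_measurable (- A (Suc (Suc n)) \<inter> ?E)" by (rule As2) (use omXB in auto)
    have "Mu (- A (Suc (Suc n)) \<inter> ?E) \<le> Mu (D n)"
      using om2 omD by (intro Mu_mono) (auto simp: D_def)
    then show ?thesis using sp MuD[of n] by simp
  qed
  have xdec: "decseq x"
    by (intro decseq_SucI) (unfold x_def, intro Mu_mono omXB, auto simp: B_Suc)
  have ydec: "decseq y"
    by (intro decseq_SucI) (unfold y_def, intro Mu_mono omB, auto simp: B_Suc)
  have tele: "x n - x m \<le> y n - y m" if "n \<le> m" for n m
    using that
  proof (induction m rule: dec_induct)
    case base then show ?case by simp
  next
    case (step m)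
    have "x n - x (Suc m) = (x n - x m) + (x m - x (Suc m))" by simp
    also have "\<dots> \<le> (y n - y m) + (y m - y (Suc m))" using step.IH xstep[of m] by (rule add_mono)
    finally show ?case by simp
  qed
  obtain Ly where "(\<lambda>N. Lmeasure (B N)) \<longlonglongrightarrow> Ly" using assms(2) by (auto simp: B_def convergent_def)
  then have yL: "y \<longlonglongrightarrow> Ly" unfolding y_def Lmeasure_def by (rule LIMSEQ_Suc)
  have yW: "\<forall>q. eventually (\<lambda>n. y n - Ly \<in> W q) sequentially" using yL tendsto_W by blast
  have "\<exists>l. x \<longlonglongrightarrow> l"
  proof (rule W_complete, intro allI)
    fix q
    obtain K where K: "\<And>n. n \<ge> K \<Longrightarrow> y n - Ly \<in> W q" using yW unfolding eventually_sequentially by blast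
    have *: "x n - x m \<in> W q" if "n \<le> m" "K \<le> n" for n m
    proof (rule W_convex)
      show "0 \<le> x n - x m" using xdec that unfolding decseq_def by simp
      show "x n - x m \<le> y n - y m" using tele that by simp
      have "y n - y m = (y n - Ly) - (y m - Ly)" by simp
      moreover have "(y n - Ly) - (y m - Ly) \<in> W q" using K that by (intro W_diff[of "y n - Ly" q "y m - Ly"]) auto
      ultimately show "y n - y m \<in> W q" by simp
    qed
    show "\<exists>K. \<forall>m\<ge>K. \<forall>n\<ge>K. x m - x n \<in> W q"
    proof (intro exI allI impI)
      fix m n assume "K \<le> m" "K \<le> n"
      show "x m - x n \<in> W q"
      proof (cases "m \<le> n")
        case True then show ?thesis using * \<open>K \<le> m\<close> by blast
      next
        case False
        then have "x n - x m \<in> W q" using * \<open>K \<le> n\<close> by simp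
        then show ?thesis using W_uminus by fastforce
      qed
    qed
  qed
  then obtain L' where xL: "x \<longlonglongrightarrow> L'" by blast
  define Y where "Y = X \<inter> (\<Inter>n\<in>{1..}. A n)"
  have YsubXB: "Y \<subseteq> X \<inter> B N" for N unfolding Y_def B_def by auto
  have lower: "L' \<le> s" if cs: "cover_sum Y s" for s
  proof (rule ccontr)
    assume "\<not> L' \<le> s"
    then have sL: "s < L'" by simp
    obtain e where e: "Rep_lc (L' - s) e > 0" "\<forall>p<e. Rep_lc (L' - s) p = 0"
      using pos_lead[of "L' - s"] sL by auto
    define q where "q = e + 1"
    obtain N where N: "\<And>n. n \<ge> N \<Longrightarrow> y n - Ly \<in> W q"
      using yW unfolding eventually_sequentially by blast
    define D' where "D' k = D (N + k)" for k
    define \<epsilon> where "\<epsilon> k = tq (q + of_nat k)" for k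
    have "\<forall>k. \<exists>c. cover_sum (D' k) c \<and> c < Mu (D' k) + \<epsilon> k"
      using Mu_approx[OF omD] tq_pos unfolding D'_def \<epsilon>_def by blast
    then have "\<exists>cD. \<forall>k. cover_sum (D' k) (cD k) \<and> cD k < Mu (D' k) + \<epsilon> k" by (rule choice)
    then obtain cD where cD0: "\<forall>k. cover_sum (D' k) (cD k) \<and> cD k < Mu (D' k) + \<epsilon> k" by blast
    have cD: "\<And>k. cover_sum (D' k) (cD k)" "\<And>k. cD k < Mu (D' k) + \<epsilon> k" using cD0 by auto
    have "\<forall>k. \<exists>t. (\<forall>n. lc_interval (fst t n) (fst (snd t) n) (snd (snd t) n)) \<and>
        D' k \<subseteq> (\<Union>n. fst t n) \<and> (\<lambda>n. snd (snd t) n - fst (snd t) n) sums cD k"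
    proof
      fix k
      obtain S a b where "\<forall>n. lc_interval (S n) (a n) (b n)" "D' k \<subseteq> (\<Union>n. S n)" "(\<lambda>n. b n - a n) sums cD k"
        using cD(1)[of k] unfolding cover_sum_def by blast
      then show "\<exists>t. (\<forall>n. lc_interval (fst t n) (fst (snd t) n) (snd (snd t) n)) \<and>
        D' k \<subseteq> (\<Union>n. fst t n) \<and> (\<lambda>n. snd (snd t) n - fst (snd t) n) sums cD k"
        by (intro exI[of _ "(S, a, b)"]) simp
    qed
    then have "\<exists>f. \<forall>k. (\<forall>n. lc_interval (fst (f k) n) (fst (snd (f k)) n) (snd (snd (f k)) n)) \<and>
        D' k \<subseteq> (\<Union>n. fst (f k) n) \<and> (\<lambda>n. snd (snd (f k)) n - fst (snd (f k)) n) sums cD k" by (rule choice)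
    then obtain f where f0: "\<forall>k. (\<forall>n. lc_interval (fst (f k) n) (fst (snd (f k)) n) (snd (snd (f k)) n)) \<and>
        D' k \<subseteq> (\<Union>n. fst (f k) n) \<and> (\<lambda>n. snd (snd (f k)) n - fst (snd (f k)) n) sums cD k" by blast
    have f: "\<And>k. (\<forall>n. lc_interval (fst (f k) n) (fst (snd (f k)) n) (snd (snd (f k)) n))"
      "\<And>k. D' k \<subseteq> (\<Union>n. fst (f k) n)" "\<And>k. (\<lambda>n. snd (snd (f k)) n - fst (snd (f k)) n) sums cD k"
      using f0 by blast+
    obtain S0 a0 b0 where s0: "\<forall>n. lc_interval (S0 n) (a0 n) (b0 n)" "Y \<subseteq> (\<Union>n. S0 n)"
      "(\<lambda>n. b0 n - a0 n) sums s" using cs unfolding cover_sum_def by blast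
    define SS where "SS k = (case k of 0 \<Rightarrow> S0 | Suc k' \<Rightarrow> fst (f k'))" for k
    define aa where "aa k = (case k of 0 \<Rightarrow> a0 | Suc k' \<Rightarrow> fst (snd (f k')))" for k
    define bb where "bb k = (case k of 0 \<Rightarrow> b0 | Suc k' \<Rightarrow> snd (snd (f k')))" for k
    define cc where "cc k = (case k of 0 \<Rightarrow> s | Suc k' \<Rightarrow> cD k')" for k
    define u where "u = tq (e + 1/2)"
    have Rep_u: "Rep_lc u (e + 1/2) > 0" "\<forall>p<e + 1/2. Rep_lc u p = 0" by (auto simp: u_def Rep_tq)
    have I: "lc_interval (SS k j) (aa k j) (bb k j)" for k j
      using s0(1) f(1) by (cases k) (auto simp: SS_def aa_def bb_def)
    have sm: "(\<lambda>j. bb k j - aa k j) sums cc k" for k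
      using s0(3) f(3) by (cases k) (auto simp: bb_def aa_def cc_def)
    have cD_nonneg: "0 \<le> cD k" for k
      by (rule sums_nonneg[OF f(3)]) (meson f(1) interval_pos less_imp_le)
    have s_nonneg: "0 \<le> s"
      by (rule sums_nonneg[OF s0(3)]) (meson s0(1) interval_pos less_imp_le)
    have MuD': "Mu (D' k) = y (N + k) - y (Suc (N + k))" for k
      unfolding D'_def by (rule MuD)
    have epsW: "\<epsilon> k \<in> W q'" if "q' \<le> q + of_nat k" for k q'
      unfolding \<epsilon>_def by (rule W_mono[OF tq_W that])
    have c0: "eventually (\<lambda>k. cc k \<in> W q') sequentially" for q'
    proof -
      obtain K1 where K1: "\<And>n. n \<ge> K1 \<Longrightarrow> y n - Ly \<in> W q'"
        using yW unfolding eventually_sequentially by blast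
      obtain K2 :: nat where K2: "q' - q < of_nat K2" using reals_Archimedean2 by blast
      show ?thesis unfolding eventually_sequentially
      proof (intro exI[of _ "Suc (max K1 K2)"] allI impI)
        fix k assume k: "Suc (max K1 K2) \<le> k"
        define k' where "k' = k - 1"
        have k': "k = Suc k'" "k' \<ge> K1" "k' \<ge> K2" using k unfolding k'_def by auto
        have yd: "y (N + k') - y (Suc (N + k')) \<in> W q'"
        proof -
          have "(y (N + k') - Ly) - (y (Suc (N + k')) - Ly) \<in> W q'"
            using K1 k' by (intro W_diff[of "y (N + k') - Ly" q' "y (Suc (N + k')) - Ly"]) auto
          then show ?thesis by simp
        qed
        have "of_nat K2 \<le> (of_nat k' :: rat)" using k' by simp
        then have "q' \<le> q + of_nat k'" using K2 by linarith
        then have "\<epsilon> k' \<in> W q'" by (rule epsW)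
        then have "Mu (D' k') + \<epsilon> k' \<in> W q'" unfolding MuD' using yd by (rule W_add[rotated])
        moreover have "cD k' \<le> Mu (D' k') + \<epsilon> k'" using cD(2)[of k'] by (rule less_imp_le)
        ultimately have "cD k' \<in> W q'" by (intro W_convex[OF cD_nonneg])
        then show "cc k \<in> W q'" using k' by (simp add: cc_def)
      qed
    qed
    have R: "(\<Sum>k<K. cc k) \<le> s + u" for K
    proof (cases K)
      case 0
      then show ?thesis using s_nonneg tq_pos[of "e + 1/2"] by (simp add: u_def)
    next
      case (Suc K')
      have "(\<Sum>k<K. cc k) = s + (\<Sum>k<K'. cD k)" unfolding Suc sum.lessThan_Suc_shift by (simp add: cc_def)
      also have "(\<Sum>k<K'. cD k) \<le> (\<Sum>k<K'. Mu (D' k) + \<epsilon> k)"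
        using cD(2) by (intro sum_mono less_imp_le)
      also have "\<dots> = (\<Sum>k<K'. y (N + k) - y (N + Suc k)) + (\<Sum>k<K'. \<epsilon> k)"
        by (simp add: sum.distrib MuD')
      also have "(\<Sum>k<K'. y (N + k) - y (N + Suc k)) = y N - y (N + K')"
        using sum_lessThan_telescope'[of "\<lambda>k. y (N + k)" K'] by simp
      also have "(y N - y (N + K')) + (\<Sum>k<K'. \<epsilon> k) < u"
      proof (rule W_less[OF Rep_u])
        have "(y N - Ly) - (y (N + K') - Ly) \<in> W q"
          using N by (intro W_diff[of "y N - Ly" q "y (N + K') - Ly"]) auto
        then have "y N - y (N + K') \<in> W q" by simp
        moreover have "(\<Sum>k<K'. \<epsilon> k) \<in> W q" by (intro W_sum epsW) simp
        ultimately show "(y N - y (N + K')) + (\<Sum>k<K'. \<epsilon> k) \<in> W q" by (rule W_add)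
        show "e + 1/2 < q" by (simp add: q_def)
      qed
      finally show ?thesis by simp
    qed
    obtain T where T: "cover_sum (\<Union>k. \<Union>j. SS k j) T" "T \<le> s + u"
      using merge_cover[OF I sm c0 R] by blast
    have cov: "X \<inter> B (Suc N) \<subseteq> (\<Union>k. \<Union>j. SS k j)"
    proof
      fix z assume z: "z \<in> X \<inter> B (Suc N)"
      show "z \<in> (\<Union>k. \<Union>j. SS k j)"
      proof (cases "z \<in> Y")
        case True
        then obtain j where "z \<in> S0 j" using s0(2) by blast
        then have "z \<in> (\<Union>j. SS 0 j)" by (auto simp: SS_def)
        then show ?thesis by blast
      next
        case False
        then have ex: "\<exists>n. 1 \<le> n \<and> z \<notin> A n" using z unfolding Y_def by auto
        define n0 where "n0 = (LEAST n. 1 \<le> n \<and> z \<notin> A n)"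
        have n0: "1 \<le> n0" "z \<notin> A n0" using LeastI_ex[OF ex] unfolding n0_def by auto
        have below: "z \<in> A n" if "1 \<le> n" "n < n0" for n
          using not_less_Least[of n "\<lambda>n. 1 \<le> n \<and> z \<notin> A n"] that unfolding n0_def by blast
        have "n0 > Suc N"
        proof (rule ccontr)
          assume "\<not> n0 > Suc N"
          then have "z \<in> A n0" using z n0(1) unfolding B_def by auto
          with n0(2) show False by simp
        qed
        then have "n0 = Suc (Suc (N + (n0 - Suc (Suc N))))" by simp
        then obtain k where k: "n0 = Suc (Suc (N + k))" by blast
        have "z \<in> B (Suc (N + k))" unfolding B_def using below k by auto
        then have "z \<in> D' k" using n0(2) k by (simp add: D'_def D_def)
        then obtain j where "z \<in> fst (f k) j" using f(2) by blast
        then have "z \<in> (\<Union>j. SS (Suc k) j)" by (auto simp: SS_def)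
        then show ?thesis by blast
      qed
    qed
    have "x N \<le> T" unfolding x_def by (rule Mu_le_cover[OF omXB cover_sum_mono[OF cov T(1)]])
    moreover have "L' \<le> x N" by (rule decseq_ge[OF xdec xL])
    moreover have "u < L' - s" unfolding u_def by (rule W_less[OF e tq_W]) simp
    ultimately have "L' \<le> s + u" "u < L' - s" using T(2) by (auto intro: order_trans)
    then have "L' - s \<le> u" "u < L' - s" by (simp_all add: diff_le_eq add.commute)
    then show False by simp
  qed
  have greatest: "l \<le> L'" if lb: "\<forall>t\<in>{s. cover_sum Y s}. l \<le> t" for l
  proof -
    have "l \<le> x n" for n
      unfolding x_def by (rule le_Mu[OF omXB]) (use lb cover_sum_mono[OF YsubXB] in auto)
    then show ?thesis using xL by (intro LIMSEQ_le_const) auto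
  qed
  have inf: "is_inf {s. cover_sum Y s} L'"
    unfolding is_inf_def using lower greatest by blast
  then have omY: "outer_measurable Y" unfolding outer_measurable_def by blast
  have MuY: "Mu Y = L'" using Mu_eq[OF inf] .
  have lim: "(\<lambda>N. Mu (X \<inter> B N)) \<longlonglongrightarrow> L'"
    using xL unfolding x_def by (rule LIMSEQ_imp_Suc)
  show ?thesis
    using omY MuY lim unfolding Y_def B_def by (auto simp: convergent_def)
qed

end
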